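(* Let $\theta=[a_1,a_2,\dots]$ be irrational with $a_1=a_2=a_3=1$, let $n\ge1$, and let $(x_k)_{k>0}$ be a finite or infinite sequence of real numbers (defined at least for $0<k\le q_n$) satisfying, for all indices $0<k<q_n$, the following: (1) $x_{q_j}<0$ if $j\equiv0,1\pmod4$ and $x_{q_j}>0$ otherwise; (2) if $k=\gamma q_j$ with $1<\gamma\le a_{j+1}$ then $x_{q_j}$ and $x_k$ have opposite signs; (3) if $k=\sum_{j\ge m}\gamma_jq_j$ is the Ostrowski representation of $k$ with lowest nonzero digit $\gamma_m$, then $x_k$ and $x_{\gamma_mq_m}$ have the same sign. Let $\mathrm{Neg}(m)$ be the number of $0<k<m$ with $x_k<0$. Then $\mathrm{Neg}(q_n)$ is even if $n\equiv0,1\pmod4$ and odd otherwise.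
   Context: $\theta=[a_1,a_2,\dots]=1/(a_1+1/(a_2+\cdots))$, $q_n$ the denominator of $[a_1,\dots,a_n]$, $q_n=a_nq_{n-1}+q_{n-2}$ (here $q_1=1,q_2=2$). Ostrowski representation: every positive integer $k$ is uniquely $k=\sum_{j\ge1}\gamma_jq_j$ with integers $0\le\gamma_j\le a_{j+1}$, finitely many nonzero, and $\gamma_j=a_{j+1}\Rightarrow\gamma_{j-1}=0$. *)

theory Defs
  imports Complex_Main
begin

text \<open>Continued fraction theta = [a_1, a_2, ...] is represented by its partial quotients
  a :: nat => nat (a 0 unused).  Denominators of the convergents:
  q_0 = 1, q_1 = a_1, q_n = a_n q_(n-1) + q_(n-2).\<close>

fun cf_q :: "(nat \<Rightarrow> nat) \<Rightarrow> nat \<Rightarrow> nat" where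
  "cf_q a 0 = 1"
| "cf_q a (Suc 0) = a 1"
| "cf_q a (Suc (Suc n)) = a (Suc (Suc n)) * cf_q a (Suc n) + cf_q a n"

text \<open>Ostrowski representation k = sum_{j>=1} g_j q_j with 0 <= g_j <= a_(j+1),
  finitely many nonzero, and g_j = a_(j+1) implies g_(j-1) = 0 (for j >= 2).
  Digits are indexed from 1; we require g 0 = 0.\<close>

definition ostrowski_rep :: "(nat \<Rightarrow> nat) \<Rightarrow> (nat \<Rightarrow> nat) \<Rightarrow> nat \<Rightarrow> bool" where
  "ostrowski_rep a g k \<longleftrightarrow>
     g 0 = 0 \<and>
     finite {j. g j \<noteq> 0} \<and>
     (\<forall>j. g j \<le> a (Suc j)) \<and>
     (\<forall>j\<ge>2. g j = a (Suc j) \<longrightarrow> g (j - 1) = 0) \<and>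
     k = (\<Sum>j\<in>{j. g j \<noteq> 0}. g j * cf_q a j)"

definition Neg :: "(nat \<Rightarrow> real) \<Rightarrow> nat \<Rightarrow> nat" where
  "Neg x m = card {k. 0 < k \<and> k < m \<and> x k < 0}"

end

theory Submission
  imports Defs
begin

lemma q_pos: assumes "\<forall>j\<ge>1. a j \<ge> (1::nat)" shows "cf_q a n \<ge> 1"
proof (induction n rule: nat_less_induct)
  case (1 n) show ?case
  proof (cases n)
    case 0 then show ?thesis by simp
  next
    case (Suc m) show ?thesis
    proof (cases m)
      case 0 then show ?thesis using Suc assms by simp
    next
      case (Suc k) then show ?thesis using \<open>n = Suc m\<close> 1 by (simp add: trans_le_add2)
    qed
  qed
qed

lemma q_rec: assumes "n \<ge> 1" shows "cf_q a (Suc n) = a (Suc n) * cf_q a n + cf_q a (n-1)"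
  using assms by (cases n) auto

lemma q_lt_suc: assumes "\<forall>j\<ge>1. a j \<ge> (1::nat)" "n \<ge> 1" shows "cf_q a n < cf_q a (Suc n)"
proof -
  have "cf_q a (n-1) \<ge> 1" "a (Suc n) \<ge> 1" using q_pos assms by auto
  then have "a (Suc n) * cf_q a n \<ge> cf_q a n" by simp
  then show ?thesis using q_rec[OF assms(2), of a] \<open>cf_q a (n-1) \<ge> 1\<close> by linarith
qed

lemma q_le_suc: assumes "\<forall>j\<ge>1. a j \<ge> (1::nat)" shows "cf_q a n \<le> cf_q a (Suc n)"
proof (cases n)
  case 0 then show ?thesis using assms by simp
next
  case (Suc m) then show ?thesis using q_lt_suc[OF assms, of n] by simp
qed

lemma q_strict: assumes "\<forall>j\<ge>1. a j \<ge> (1::nat)" "1 \<le> j" shows "j < N \<Longrightarrow> cf_q a j < cf_q a N"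
proof (induction N)
  case 0 then show ?case by simp
next
  case (Suc N)
  show ?case
  proof (cases "j = N")
    case True then show ?thesis using q_lt_suc assms by simp
  next
    case False then have "j < N" using Suc by simp
    then have "N \<ge> 1" using assms by simp
    then show ?thesis using Suc.IH \<open>j < N\<close> q_lt_suc[OF assms(1)] by (meson less_trans)
  qed
qed

lemma q_mono: assumes "\<forall>j\<ge>1. a j \<ge> (1::nat)" shows "j \<le> N \<Longrightarrow> cf_q a j \<le> cf_q a N"
proof (induction N)
  case 0 then show ?case by simp
next
  case (Suc N)
  show ?case
  proof (cases "j = Suc N")
    case True then show ?thesis by simp
  next
    case False
    then have "j \<le> N" using Suc.prems by simp
    then have "cf_q a j \<le> cf_q a N" by (rule Suc.IH)
    also have "\<dots> \<le> cf_q a (Suc N)" by (rule q_le_suc[OF assms])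
    finally show ?thesis .
  qed
qed

lemma ostr_sum:
  assumes "\<forall>j\<ge>M. g j = 0"
  shows "(\<Sum>j\<in>{j. g j \<noteq> 0}. g j * cf_q a j) = (\<Sum>j<M. g j * cf_q a j)"
proof -
  have sub: "{j. g j \<noteq> 0} \<subseteq> {..<M}" using assms by (auto simp: not_less[symmetric])
  show ?thesis by (rule sum.mono_neutral_left) (use sub in auto)
qed

lemma ostr_zero: "ostrowski_rep a (\<lambda>_. 0) 0"
  unfolding ostrowski_rep_def by simp

lemma ostr_ext:
  assumes apos: "\<forall>j\<ge>1. a j \<ge> (1::nat)"
    and rep: "ostrowski_rep a g r" and supp: "\<forall>j\<ge>n. g j = 0" and n1: "n \<ge> 1"
    and c: "c \<le> a (Suc n)" and cc: "c = a (Suc n) \<longrightarrow> g (n-1) = 0"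
  shows "ostrowski_rep a (g(n:=c)) (c * cf_q a n + r) \<and> (\<forall>j\<ge>Suc n. (g(n:=c)) j = 0)"
proof -
  let ?g = "g(n:=c)"
  have supp': "\<forall>j\<ge>Suc n. ?g j = 0" using supp by auto
  have g0: "g 0 = 0" and fin: "finite {j. g j \<noteq> 0}" and bd: "\<forall>j. g j \<le> a (Suc j)"
    and cnd: "\<forall>j\<ge>2. g j = a (Suc j) \<longrightarrow> g (j - 1) = 0"
    and sm: "r = (\<Sum>j\<in>{j. g j \<noteq> 0}. g j * cf_q a j)"
    using rep unfolding ostrowski_rep_def by auto
  have "finite {j. ?g j \<noteq> 0}"
    by (rule finite_subset[of _ "{..<Suc n}"]) (use supp' in \<open>auto simp: not_less[symmetric]\<close>)
  moreover have "?g 0 = 0" using g0 n1 by simp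
  moreover have "\<forall>j. ?g j \<le> a (Suc j)" using bd c by simp
  moreover have "\<forall>j\<ge>2. ?g j = a (Suc j) \<longrightarrow> ?g (j - 1) = 0"
  proof (intro allI impI)
    fix j assume j2: "j \<ge> 2" and eq: "?g j = a (Suc j)"
    show "?g (j - 1) = 0"
    proof (cases "j < n")
      case True then show ?thesis using cnd j2 eq by auto
    next
      case False
      show ?thesis
      proof (cases "j = n")
        case True then show ?thesis using cc eq j2 by auto
      next
        case False
        then have "j > n" using \<open>\<not> j < n\<close> by simp
        then have "?g j = 0" using supp by simp
        moreover have "a (Suc j) \<ge> 1" using apos by simp
        ultimately show ?thesis using eq by simp
      qed
    qed
  qed
  moreover have "c * cf_q a n + r = (\<Sum>j\<in>{j. ?g j \<noteq> 0}. ?g j * cf_q a j)"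
  proof -
    have "(\<Sum>j\<in>{j. ?g j \<noteq> 0}. ?g j * cf_q a j) = (\<Sum>j<Suc n. ?g j * cf_q a j)"
      by (rule ostr_sum[OF supp'])
    also have "\<dots> = (\<Sum>j<n. g j * cf_q a j) + c * cf_q a n" by simp
    also have "(\<Sum>j<n. g j * cf_q a j) = r" using sm ostr_sum[OF supp] by simp
    finally show ?thesis by simp
  qed
  ultimately show ?thesis unfolding ostrowski_rep_def using supp' by blast
qed

lemma ostr_ex: assumes apos: "\<forall>j\<ge>1. a j \<ge> (1::nat)" and a1: "a 1 = 1"
  shows "r < cf_q a n \<Longrightarrow> \<exists>g. ostrowski_rep a g r \<and> (\<forall>j\<ge>n. g j = 0)"
proof (induction n arbitrary: r rule: less_induct)
  case (less n)
  show ?case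
  proof (cases "n \<le> 1")
    case True
    then have "cf_q a n = 1" using a1 by (cases n) (auto simp: le_Suc_eq)
    then have "r = 0" using less.prems by simp
    then show ?thesis using ostr_zero by blast
  next
    case False
    then obtain m where n: "n = Suc m" and m1: "m \<ge> 1" by (cases n) auto
    have qn: "cf_q a n = a (Suc m) * cf_q a m + cf_q a (m-1)" using q_rec[OF m1] n by simp
    have qm: "cf_q a (m-1) \<le> cf_q a m" using q_mono[OF apos] by simp
    have qpos: "cf_q a m \<ge> 1" using q_pos[OF apos] .
    show ?thesis
    proof (cases "r < a (Suc m) * cf_q a m")
      case True
      define c where "c = r div cf_q a m"
      define r' where "r' = r mod cf_q a m"
      have rr: "r = c * cf_q a m + r'" unfolding c_def r'_def by (metis div_mult_mod_eq)
      have "r' < cf_q a m" unfolding r'_def using qpos by simp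
      then obtain g where g: "ostrowski_rep a g r'" "\<forall>j\<ge>m. g j = 0" using less.IH n by blast
      have "c < a (Suc m)" unfolding c_def using True qpos
        by (simp add: less_mult_imp_div_less)
      from ostr_ext[OF apos g m1, of c] this
      show ?thesis using rr n by auto
    next
      case False
      define r' where "r' = r - a (Suc m) * cf_q a m"
      have rr: "r = a (Suc m) * cf_q a m + r'" unfolding r'_def using False by simp
      have "r' < cf_q a (m-1)" using rr qn less.prems by simp
      then obtain g where g: "ostrowski_rep a g r'" "\<forall>j\<ge>m-1. g j = 0" using less.IH n
        by (metis diff_le_self le_imp_less_Suc)
      have supp: "\<forall>j\<ge>m. g j = 0" using g(2) by auto
      from ostr_ext[OF apos g(1) supp m1, of "a (Suc m)"] g(2)
      show ?thesis using rr n by auto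
    qed
  qed
qed

lemma Neg_Suc: "Neg x (Suc m) = Neg x m + (if 0 < m \<and> x m < 0 then 1 else 0)"
proof -
  have A: "{k. 0 < k \<and> k < Suc m \<and> x k < 0} = {k. 0 < k \<and> k < m \<and> x k < 0} \<union> {k. k = m \<and> 0 < m \<and> x m < 0}"
    by (auto simp: less_Suc_eq)
  have f: "finite {k. 0 < k \<and> k < m \<and> x k < 0}" by (rule finite_subset[of _ "{..<m}"]) auto
  show ?thesis unfolding Neg_def A
    by (subst card_Un_disjoint) (use f in auto)
qed

lemma Neg_0: "Neg x 0 = 0" "Neg x 1 = 0" unfolding Neg_def by auto

lemma Neg_shift:
  assumes "s > 0" "\<forall>r. 0 < r \<and> r < L \<longrightarrow> (x (s + r) < 0 \<longleftrightarrow> x r < 0)" "L \<ge> 1"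
  shows "Neg x (s + L) = Neg x s + (if x s < 0 then 1 else 0) + Neg x L"
  using assms(2,3)
proof (induction L)
  case 0 then show ?case by simp
next
  case (Suc L)
  show ?case
  proof (cases "L = 0")
    case True then show ?thesis using Neg_Suc[of x s] assms(1) Neg_0 by simp
  next
    case False
    then have "Neg x (s + L) = Neg x s + (if x s < 0 then 1 else 0) + Neg x L" using Suc by simp
    moreover have "x (s + L) < 0 \<longleftrightarrow> x L < 0" using Suc.prems(1) False by simp
    ultimately show ?thesis using Neg_Suc[of x "s+L"] Neg_Suc[of x L] False assms(1) by simp
  qed
qed


lemma sgn_neg_iff: "sgn (u::real) = sgn v \<Longrightarrow> (u < 0 \<longleftrightarrow> v < 0)"
  by (auto simp: sgn_if split: if_splits)

theorem lemma2p5: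
  fixes a :: "nat \<Rightarrow> nat" and x :: "nat \<Rightarrow> real" and n :: nat
  assumes a_pos: "\<forall>j\<ge>1. a j \<ge> 1"
    and a123: "a 1 = 1" "a 2 = 1" "a 3 = 1"
    and n_pos: "n \<ge> 1"
    and cond1: "\<forall>j\<ge>1. 0 < cf_q a j \<and> cf_q a j < cf_q a n \<longrightarrow>
                  (if j mod 4 = 0 \<or> j mod 4 = 1 then x (cf_q a j) < 0 else x (cf_q a j) > 0)"
    and cond2: "\<forall>j\<ge>1. \<forall>\<gamma>. 0 < \<gamma> * cf_q a j \<and> \<gamma> * cf_q a j < cf_q a n \<and>
                  1 < \<gamma> \<and> \<gamma> \<le> a (Suc j) \<longrightarrow>
                  sgn (x (\<gamma> * cf_q a j)) = - sgn (x (cf_q a j))"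
    and cond3: "\<forall>k g m. 0 < k \<and> k < cf_q a n \<and> ostrowski_rep a g k \<and> g m \<noteq> 0 \<and>
                  (\<forall>j<m. g j = 0) \<longrightarrow> sgn (x k) = sgn (x (g m * cf_q a m))"
  shows "even (Neg x (cf_q a n)) \<longleftrightarrow> (n mod 4 = 0 \<or> n mod 4 = 1)"
proof -
  let ?q = "cf_q a"
  have qpos: "\<And>j. ?q j \<ge> 1" using q_pos[OF a_pos] .
  have qrec: "\<And>m. m \<ge> 1 \<Longrightarrow> ?q (Suc m) = a (Suc m) * ?q m + ?q (m-1)" using q_rec by blast
  have qmono: "\<And>i j. i \<le> j \<Longrightarrow> ?q i \<le> ?q j" using q_mono[OF a_pos] by blast
  have sgnshift: "x (c * ?q m + r) < 0 \<longleftrightarrow> x r < 0"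
    if m1: "1 \<le> m" and mn: "Suc m \<le> n" and c1: "1 \<le> c" and ca: "c \<le> a (Suc m)" and r0: "0 < r"
      and rm: "r < ?q m" and rc: "c = a (Suc m) \<longrightarrow> r < ?q (m-1)" for m c r
  proof -
    obtain g where g: "ostrowski_rep a g r" "\<forall>j\<ge>m. g j = 0" "c = a (Suc m) \<longrightarrow> g (m-1) = 0"
    proof (cases "c = a (Suc m)")
      case True
      then obtain g where "ostrowski_rep a g r" "\<forall>j\<ge>m-1. g j = 0"
        using ostr_ex[OF a_pos a123(1)] rc by blast
      then show ?thesis using that by auto
    next
      case False
      then obtain g where "ostrowski_rep a g r" "\<forall>j\<ge>m. g j = 0"
        using ostr_ex[OF a_pos a123(1)] rm by blast
      then show ?thesis using that False by auto
    qed
    have ext: "ostrowski_rep a (g(m:=c)) (c * ?q m + r)"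
      using ostr_ext[OF a_pos g(1) g(2) m1 ca g(3)] by blast
    have "\<exists>j. g j \<noteq> 0"
    proof (rule ccontr)
      assume "\<not> (\<exists>j. g j \<noteq> 0)"
      then have "{j. g j \<noteq> 0} = {}" by auto
      then show False using g(1) r0 unfolding ostrowski_rep_def by simp
    qed
    define mm where "mm = (LEAST j. g j \<noteq> 0)"
    have gmm: "g mm \<noteq> 0" unfolding mm_def using \<open>\<exists>j. g j \<noteq> 0\<close> by (rule LeastI_ex)
    have below: "\<forall>j<mm. g j = 0" unfolding mm_def using not_less_Least by blast
    have mmm: "mm < m" using gmm g(2) by (meson not_less)
    have qsm: "?q (Suc m) \<le> ?q n" using qmono mn by blast
    have "c * ?q m + r < ?q (Suc m)"
    proof (cases "c = a (Suc m)")
      case True then show ?thesis using rc qrec[OF m1] by simp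
    next
      case False
      then have "Suc c \<le> a (Suc m)" using ca by simp
      then have "Suc c * ?q m \<le> a (Suc m) * ?q m" by (rule mult_right_mono) simp
      then show ?thesis using rm qrec[OF m1] by simp
    qed
    then have kn: "c * ?q m + r < ?q n" using qsm by linarith
    have rn: "r < ?q n" using kn by linarith
    have s1: "sgn (x r) = sgn (x (g mm * ?q mm))" using cond3 r0 rn g(1) gmm below by blast
    have s2:  "sgn (x (c * ?q m + r)) = sgn (x ((g(m:=c)) mm * ?q mm))"
    proof (rule cond3[rule_format], intro conjI)
      show "0 < c * ?q m + r" using r0 by simp
      show "c * ?q m + r < ?q n" by (rule kn)
      show "ostrowski_rep a (g(m:=c)) (c * ?q m + r)" by (rule ext)
      show "(g(m:=c)) mm \<noteq> 0" using gmm mmm by simp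
      show "\<forall>j<mm. (g(m:=c)) j = 0" using below mmm by simp
    qed
    have "(g(m:=c)) mm = g mm" using mmm by simp
    then have "sgn (x (c * ?q m + r)) = sgn (x r)" using s1 s2 by simp
    then show ?thesis by (rule sgn_neg_iff)
  qed
  have block: "Neg x (?q (Suc m)) = a (Suc m) * Neg x (?q m)
      + (if x (?q m) < 0 then 1 else a (Suc m) - 1) + Neg x (?q (m-1))"
    if m1: "1 \<le> m" and mn: "Suc m \<le> n" for m
  proof -
    have qmn: "?q m < ?q n" using q_strict[OF a_pos m1] mn by simp
    have c1m: "if m mod 4 = 0 \<or> m mod 4 = 1 then x (?q m) < 0 else x (?q m) > 0"
      using cond1[rule_format, of m] m1 qmn qpos[of m] by simp
    have xq: "x (?q m) \<noteq> 0" using c1m by (simp split: if_splits)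
    have qsm: "?q (Suc m) \<le> ?q n" using qmono mn by blast
    have opp: "x (c * ?q m) < 0 \<longleftrightarrow> \<not> x (?q m) < 0" if "2 \<le> c" "c \<le> a (Suc m)" for c
    proof -
      have "c * ?q m \<le> a (Suc m) * ?q m" using that by simp
      then have "c * ?q m < ?q n" using qrec[OF m1] qpos[of "m-1"] qsm by linarith
      moreover have "0 < c * ?q m" using that qpos[of m] by simp
      ultimately have "sgn (x (c * ?q m)) = - sgn (x (?q m))" using cond2[rule_format, of m c] m1 that by simp
      then show ?thesis using xq by (auto simp: sgn_if split: if_splits)
    qed
    have G: "Neg x (c * ?q m) = c * Neg x (?q m) + (if x (?q m) < 0 then (if c \<ge> 2 then 1 else 0) else c - 2)"
      if "1 \<le> c" "c \<le> a (Suc m)" for c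
      using that
    proof (induction c)
      case 0 then show ?case by simp
    next
      case (Suc c)
      show ?case
      proof (cases "c = 0")
        case True then show ?thesis by simp
      next
        case False
        then have c1: "1 \<le> c" and ca: "c < a (Suc m)" using Suc.prems by auto
        have IH: "Neg x (c * ?q m) = c * Neg x (?q m) + (if x (?q m) < 0 then (if c \<ge> 2 then 1 else 0) else c - 2)"
          using Suc.IH c1 ca by simp
        have sh: "\<forall>r. 0 < r \<and> r < ?q m \<longrightarrow> (x (c * ?q m + r) < 0 \<longleftrightarrow> x r < 0)"
          using sgnshift[OF m1 mn c1] ca by simp
        have NS: "Neg x (c * ?q m + ?q m) = Neg x (c * ?q m) + (if x (c * ?q m) < 0 then 1 else 0) + Neg x (?q m)"
          by (rule Neg_shift) (use c1 qpos[of m] sh in auto)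
        have SC: "Suc c * ?q m = c * ?q m + ?q m" by simp
        have E: "Neg x (Suc c * ?q m) = Neg x (c * ?q m) + (if x (c * ?q m) < 0 then 1 else 0) + Neg x (?q m)"
          unfolding SC by (rule NS)
        have O: "c \<ge> 2 \<Longrightarrow> (x (c * ?q m) < 0 \<longleftrightarrow> \<not> x (?q m) < 0)" using opp ca by simp
        show ?thesis
        proof (cases "c \<ge> 2")
          case True
          then show ?thesis using E O IH by (cases "x (?q m) < 0") (simp_all add: algebra_simps)
        next
          case False
          then have "c = 1" using c1 by simp
          then show ?thesis using E by (cases "x (?q m) < 0") simp_all
        qed
      qed
    qed
    let ?A = "a (Suc m)"
    have A1: "?A \<ge> 1" using a_pos by simp
    have sh: "\<forall>r. 0 < r \<and> r < ?q (m-1) \<longrightarrow> (x (?A * ?q m + r) < 0 \<longleftrightarrow> x r < 0)"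
    proof (intro allI impI)
      fix r assume r: "0 < r \<and> r < ?q (m-1)"
      then have "r < ?q m" using qmono[of "m-1" m] by simp
      then show "x (?A * ?q m + r) < 0 \<longleftrightarrow> x r < 0" using sgnshift[OF m1 mn A1] r by simp
    qed
    have "Neg x (?A * ?q m + ?q (m-1)) = Neg x (?A * ?q m) + (if x (?A * ?q m) < 0 then 1 else 0) + Neg x (?q (m-1))"
      by (rule Neg_shift) (use A1 qpos[of m] qpos[of "m-1"] sh in auto)
    moreover have "?A \<ge> 2 \<Longrightarrow> (x (?A * ?q m) < 0 \<longleftrightarrow> \<not> x (?q m) < 0)" using opp by simp
    moreover have "Neg x (?A * ?q m) = ?A * Neg x (?q m) + (if x (?q m) < 0 then (if ?A \<ge> 2 then 1 else 0) else ?A - 2)"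
      using G A1 by simp
    ultimately have E: "Neg x (?q (Suc m)) = Neg x (?A * ?q m) + (if x (?A * ?q m) < 0 then 1 else 0) + Neg x (?q (m-1))"
      and O: "?A \<ge> 2 \<Longrightarrow> (x (?A * ?q m) < 0 \<longleftrightarrow> \<not> x (?q m) < 0)"
      and GA: "Neg x (?A * ?q m) = ?A * Neg x (?q m) + (if x (?q m) < 0 then (if ?A \<ge> 2 then 1 else 0) else ?A - 2)"
      using qrec[OF m1] by simp_all
    show ?thesis
    proof (cases "?A \<ge> 2")
      case True
      then show ?thesis using E O GA by (cases "x (?q m) < 0") simp_all
    next
      case False
      then have "?A = 1" using A1 by simp
      then show ?thesis using E by (cases "x (?q m) < 0") simp_all
    qed
  qed
  have main: "m \<le> n \<Longrightarrow> (even (Neg x (?q m)) \<longleftrightarrow> (m mod 4 = 0 \<or> m mod 4 = 1))" for m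
  proof (induction m rule: less_induct)
    case (less m)
    show ?case
    proof (cases "m \<le> 1")
      case True
      then have "?q m = 1" using a123(1) by (cases m) (auto simp: le_Suc_eq)
      then show ?thesis using True Neg_0 by (cases m) auto
    next
      case False
      define j where "j = m - 2"
      have m: "m = Suc (Suc j)" using False unfolding j_def by simp
      define k where "k = Suc j"
      have k1: "k \<ge> 1" and km1: "k - 1 = j" and mk: "m = Suc k" unfolding k_def using m by simp_all
      have IH1: "even (Neg x (?q k)) \<longleftrightarrow> (k mod 4 = 0 \<or> k mod 4 = 1)" using less mk by simp
      have IH2: "even (Neg x (?q j)) \<longleftrightarrow> (j mod 4 = 0 \<or> j mod 4 = 1)" using less m by simp
      have qkn: "?q k < ?q n" using q_strict[OF a_pos k1] less.prems mk by simp
      have c1k: "if k mod 4 = 0 \<or> k mod 4 = 1 then x (?q k) < 0 else x (?q k) > 0"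
        using cond1[rule_format, of k] k1 qkn qpos[of k] by simp
      have sx: "x (?q k) < 0 \<longleftrightarrow> (k mod 4 = 0 \<or> k mod 4 = 1)" using c1k
        by (simp split: if_splits)
      have kn: "Suc k \<le> n" using less.prems mk by simp
      have B0: "Neg x (?q (Suc k)) = a (Suc k) * Neg x (?q k) + (if x (?q k) < 0 then 1 else a (Suc k) - 1) + Neg x (?q (k-1))"
        by (rule block[OF k1 kn])
      have B: "Neg x (?q m) = a m * Neg x (?q k) + (if x (?q k) < 0 then 1 else a m - 1) + Neg x (?q j)"
        using B0 unfolding km1 mk .
      have am: "a m \<ge> 1" using a_pos m by simp
      have e1: "even (a m - 1) \<longleftrightarrow> odd (a m)" using am by (cases "a m") simp_all
      have parB: "even (Neg x (?q m)) \<longleftrightarrow> ((even (a m) \<or> even (Neg x (?q k))) \<longleftrightarrow>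
          ((\<not> x (?q k) < 0 \<and> odd (a m)) \<longleftrightarrow> even (Neg x (?q j))))"
        unfolding B using e1 am by (cases "x (?q k) < 0") auto
      have "j mod 4 = 0 \<or> j mod 4 = 1 \<or> j mod 4 = 2 \<or> j mod 4 = 3" by presburger
      then consider "j mod 4 = 0" | "j mod 4 = 1" | "j mod 4 = 2" | "j mod 4 = 3" by argo
      then show ?thesis
      proof cases
        case 1
        then have "k mod 4 = 1" "m mod 4 = 2" unfolding k_def m by presburger+
        then show ?thesis using parB IH1 IH2 sx 1 by simp
      next
        case 2
        then have "k mod 4 = 2" "m mod 4 = 3" unfolding k_def m by presburger+
        then show ?thesis using parB IH1 IH2 sx 2 by simp
      next
        case 3
        then have "k mod 4 = 3" "m mod 4 = 0" unfolding k_def m by presburger+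
        then show ?thesis using parB IH1 IH2 sx 3 by simp
      next
        case 4
        then have "k mod 4 = 0" "m mod 4 = 1" unfolding k_def m by presburger+
        then show ?thesis using parB IH1 IH2 sx 4 by simp
      qed
    qed
  qed
  show ?thesis using main by simp
qed

end
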